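(* For every real $x>1$, $$\frac{8\pi(x-1)\Psi(\tfrac12x)\Psi(2x)+2\vartheta_2(0,2ix)^2}{\vartheta_3(\tfrac\pi2,\tfrac i2x)^2}<\frac{2\vartheta_2(0,2i)^2}{\vartheta_3(\tfrac\pi2,\tfrac i2)^2}=1,$$ where $\Psi(y)=\sum_{k=1}^\infty k\,e^{-\pi yk^2}$ for $y>0$.
   Context: For $z,t\in\mathbb C$ with $\operatorname{Im}t>0$: $\vartheta_2(z,t)=\sum_{n\in\mathbb Z}e^{\pi i t(n+\frac12)^2}e^{2iz(n+\frac12)}$ and $\vartheta_3(z,t)=\sum_{n\in\mathbb Z}e^{\pi i t n^2}e^{2izn}$. *)

theory Defs
  imports "HOL-Analysis.Analysis"
begin

definition theta2 :: "complex \<Rightarrow> complex \<Rightarrow> complex" where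
  "theta2 z t = (\<Sum>\<^sub>\<infinity>n::int. exp (pi * \<i> * t * (of_int n + 1/2)^2) * exp (2 * \<i> * z * (of_int n + 1/2)))"

definition theta3 :: "complex \<Rightarrow> complex \<Rightarrow> complex" where
  "theta3 z t = (\<Sum>\<^sub>\<infinity>n::int. exp (pi * \<i> * t * (of_int n)^2) * exp (2 * \<i> * z * of_int n))"

definition Psi :: "real \<Rightarrow> real" where
  "Psi y = (\<Sum>k. real (Suc k) * exp (- pi * y * (real (Suc k))^2))"

end

theory Submission
  imports Defs "HOL-Probability.Probability"
begin

lemma cos_prod_step:
  "cos (2*pi*a) * cos (2*pi*real_of_int m*a) =
   (cos (2*pi*real_of_int (m+1)*a) + cos (2*pi*real_of_int (m-1)*a)) / 2"
  by (simp add: cos_add cos_diff algebra_simps)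

lemma aux: "(c::real) * cm = (A + B) / 2 \<Longrightarrow> p * c ^ Suc k * cm = p * c ^ k * A / 2 + p * c ^ k * B / 2"
proof -
  assume h: "c * cm = (A + B) / 2"
  have "p * c ^ Suc k * cm = p * c ^ k * (c * cm)" by (simp add: algebra_simps)
  also have "\<dots> = p * c ^ k * A / 2 + p * c ^ k * B / 2" by (simp add: h algebra_simps add_divide_distrib)
  finally show ?thesis .
qed

lemma fourier_cos_pow:
  fixes \<phi> :: "real \<Rightarrow> real"
  assumes cont: "continuous_on {0..1/2} \<phi>"
  assumes orth: "\<And>m::nat. integral {0..1/2} (\<lambda>a. \<phi> a * cos (2*pi*real m*a)) = 0"
  shows "integral {0..1/2} (\<lambda>a. \<phi> a * (cos (2*pi*a))^k * cos (2*pi*real_of_int m*a)) = 0"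
proof (induction k arbitrary: m)
  case 0
  have "cos (2*pi*real_of_int m*a) = cos (2*pi*real (nat \<bar>m\<bar>)*a)" for a
  proof (cases "m \<ge> 0")
    case True then show ?thesis by simp
  next
    case False
    then have "real (nat \<bar>m\<bar>) = - real_of_int m" by simp
    then show ?thesis by (metis cos_minus minus_mult_left mult_minus_right)
  qed
  then show ?case using orth[of "nat \<bar>m\<bar>"] by simp
next
  case (Suc k)
  have eq: "\<phi> a * (cos (2*pi*a))^Suc k * cos (2*pi*real_of_int m*a) =
     (\<phi> a * (cos (2*pi*a))^k * cos (2*pi*real_of_int (m+1)*a)) / 2 +
     (\<phi> a * (cos (2*pi*a))^k * cos (2*pi*real_of_int (m-1)*a)) / 2" for a
    by (rule aux[OF cos_prod_step])
  have int: "(\<lambda>a. \<phi> a * (cos (2*pi*a))^k * cos (2*pi*real_of_int j*a)) integrable_on {0..1/2}" for j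
    by (intro integrable_continuous_interval continuous_intros cont)
  show ?case
    unfolding eq
    using Suc.IH[of "m+1"] Suc.IH[of "m-1"] int[of "m+1"] int[of "m-1"]
    by (simp add: integral_add integrable_on_divide)
qed

lemma fourier_poly:
  fixes \<phi> :: "real \<Rightarrow> real"
  assumes cont: "continuous_on {0..1/2} \<phi>"
  assumes orth: "\<And>m::nat. integral {0..1/2} (\<lambda>a. \<phi> a * cos (2*pi*real m*a)) = 0"
  assumes p: "real_polynomial_function p"
  shows "integral {0..1/2} (\<lambda>a. \<phi> a * p (cos (2*pi*a))) = 0"
proof -
  obtain c n where pc: "p = (\<lambda>x. \<Sum>i\<le>n. c i * x^i)"
    using p real_polynomial_function_iff_sum by blast
  have k: "integral {0..1/2} (\<lambda>a. \<phi> a * (cos (2*pi*a))^k) = 0" for k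
    using fourier_cos_pow[OF cont orth, of k 0] by simp
  have "integral {0..1/2} (\<lambda>a. \<phi> a * p (cos (2*pi*a))) =
        integral {0..1/2} (\<lambda>a. \<Sum>i\<le>n. c i * (\<phi> a * (cos (2*pi*a))^i))"
    by (simp add: pc sum_distrib_left algebra_simps)
  also have "\<dots> = (\<Sum>i\<le>n. integral {0..1/2} (\<lambda>a. c i * (\<phi> a * (cos (2*pi*a))^i)))"
    by (intro integral_sum) (auto intro!: integrable_continuous_interval continuous_intros cont)
  also have "\<dots> = 0" using k by simp
  finally show ?thesis .
qed

lemma fourier_unique:
  fixes \<phi> :: "real \<Rightarrow> real"
  assumes cont: "continuous_on {0..1/2} \<phi>"
  assumes orth: "\<And>m::nat. integral {0..1/2} (\<lambda>a. \<phi> a * cos (2*pi*real m*a)) = 0"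
  assumes x: "x \<in> {0..1/2}"
  shows "\<phi> x = 0"
proof -
  define \<psi> where "\<psi> u = \<phi> (arccos u / (2*pi))" for u
  have arc: "arccos u / (2*pi) \<in> {0..1/2}" if "u \<in> {-1..1}" for u
    using that arccos_lbound[of u] arccos_ubound[of u] by (auto simp: field_simps)
  have cpsi: "continuous_on {-1..1} \<psi>"
    unfolding \<psi>_def
    by (intro continuous_on_compose2[OF cont] continuous_intros continuous_on_arccos')
       (use arc in auto)
  have psi_cos: "\<psi> (cos (2*pi*a)) = \<phi> a" if "a \<in> {0..1/2}" for a
  proof -
    have "arccos (cos (2*pi*a)) = 2*pi*a"
      using that by (intro arccos_cos) auto
    then show ?thesis by (simp add: \<psi>_def)
  qed
  obtain M where M0: "\<forall>a\<in>{0..1/2}. \<bar>\<phi> a\<bar> \<le> M"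
    using compact_imp_bounded[OF compact_continuous_image[OF cont]]
    by (auto simp: bounded_real)
  then have M: "\<And>a. a \<in> {0..1/2} \<Longrightarrow> \<bar>\<phi> a\<bar> \<le> M" by blast
  have le: "integral {0..1/2} (\<lambda>a. (\<phi> a)^2) \<le> M * e" if e: "e > 0" for e
  proof -
    obtain p where p: "real_polynomial_function p" and pe: "\<And>u. u \<in> {-1..1} \<Longrightarrow> \<bar>\<psi> u - p u\<bar> < e"
      using Stone_Weierstrass_real_polynomial_function[OF _ cpsi e] by auto
    have pe': "\<bar>\<phi> a - p (cos (2*pi*a))\<bar> \<le> e" if "a \<in> {0..1/2}" for a
      using pe[of "cos (2*pi*a)"] psi_cos[OF that] by fastforce
    have cp: "continuous_on {0..1/2} (\<lambda>a. p (cos (2*pi*a)))"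
      by (intro continuous_on_compose2[OF continuous_at_imp_continuous_on[OF ballI[OF continuous_real_polymonial_function[OF p]]]] continuous_intros) auto
    have "integral {0..1/2} (\<lambda>a. (\<phi> a)^2) =
          integral {0..1/2} (\<lambda>a. \<phi> a * (\<phi> a - p (cos (2*pi*a)))) + integral {0..1/2} (\<lambda>a. \<phi> a * p (cos (2*pi*a)))"
    proof -
      have "integral {0..1/2} (\<lambda>a. (\<phi> a)^2) = integral {0..1/2} (\<lambda>a. \<phi> a * (\<phi> a - p (cos (2*pi*a))) + \<phi> a * p (cos (2*pi*a)))"
        by (rule integral_cong) (simp add: power2_eq_square algebra_simps)
      also have "\<dots> = integral {0..1/2} (\<lambda>a. \<phi> a * (\<phi> a - p (cos (2*pi*a)))) + integral {0..1/2} (\<lambda>a. \<phi> a * p (cos (2*pi*a)))"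
        by (rule integral_add; rule integrable_continuous_interval; intro continuous_intros cont cp)
      finally show ?thesis .
    qed
    also have "\<dots> = integral {0..1/2} (\<lambda>a. \<phi> a * (\<phi> a - p (cos (2*pi*a))))"
      using fourier_poly[OF cont orth p] by simp
    also have "\<dots> \<le> integral {0..1/2::real} (\<lambda>a. M * e)"
    proof (rule integral_le)
      show "(\<lambda>a. \<phi> a * (\<phi> a - p (cos (2*pi*a)))) integrable_on {0..1/2}"
        by (auto intro!: integrable_continuous_interval continuous_intros cont cp)
      fix a assume a: "a \<in> {0..1/2::real}"
      have "\<phi> a * (\<phi> a - p (cos (2*pi*a))) \<le> \<bar>\<phi> a\<bar> * \<bar>\<phi> a - p (cos (2*pi*a))\<bar>"
        by (metis abs_ge_self abs_mult)
      also have "\<dots> \<le> M * e"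
        using M[OF a] pe'[OF a] by (intro mult_mono) auto
      finally show "\<phi> a * (\<phi> a - p (cos (2*pi*a))) \<le> M * e" .
    qed auto
    also have "\<dots> = M * e / 2" by simp
    also have "\<dots> \<le> M * e"
      using M[of 0] e by (auto simp: field_simps intro!: mult_nonneg_nonneg)
    finally show ?thesis .
  qed
  have I0: "integral {0..1/2} (\<lambda>a. (\<phi> a)^2) \<le> 0"
  proof (cases "M > 0")
    case True
    show ?thesis
    proof (rule field_le_epsilon)
      fix e :: real assume "e > 0"
      then show "integral {0..1/2} (\<lambda>a. (\<phi> a)^2) \<le> 0 + e"
        using le[of "e / M"] True by simp
    qed
  next
    case False
    then show ?thesis using le[of 1] by simp
  qed
  have I1: "integral {0..1/2} (\<lambda>a. (\<phi> a)^2) \<ge> 0"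
    by (intro integral_nonneg) (auto intro!: integrable_continuous_interval continuous_intros cont)
  have hi: "((\<lambda>a. (\<phi> a)^2) has_integral 0) (cbox 0 (1/2))"
    using I0 I1 integrable_integral[of "\<lambda>a. (\<phi> a)^2" "{0..1/2}"]
    by (auto intro!: integrable_continuous_interval continuous_intros cont)
  have "(\<phi> x)^2 = 0"
    by (rule has_integral_0_cbox_imp_0[OF _ _ hi]) (use x cont in \<open>auto intro!: continuous_intros\<close>)
  then show ?thesis by simp
qed


lemma gauss_cos_std:
  "integrable lborel (\<lambda>x. std_normal_density x * cos (s * x)) \<and>
   integral\<^sup>L lborel (\<lambda>x. std_normal_density x * cos (s * x)) = exp (- (s^2) / 2)"
proof
  have int1: "integrable lborel std_normal_density"
    by simp
  show int: "integrable lborel (\<lambda>x. std_normal_density x * cos (s * x))"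
    by (rule Bochner_Integration.integrable_bound[OF int1]) (auto simp: abs_mult intro!: mult_left_le)
  have "char std_normal_distribution s = exp (- (s^2) / 2)"
    by (simp add: char_std_normal_distribution)
  then have "(\<integral>x. std_normal_density x *\<^sub>R iexp (s * x) \<partial>lborel) = exp (- (s^2) / 2)"
    unfolding char_def by (subst (asm) integral_density) auto
  then have "Re (\<integral>x. std_normal_density x *\<^sub>R iexp (s * x) \<partial>lborel) = exp (- (s^2) / 2)"
    by (metis Re_complex_of_real)
  moreover have "Re (\<integral>x. std_normal_density x *\<^sub>R iexp (s * x) \<partial>lborel) =
     (\<integral>x. Re (std_normal_density x *\<^sub>R iexp (s * x)) \<partial>lborel)"
    by (rule integral_Re[symmetric], rule Bochner_Integration.integrable_bound[OF int1]) (auto simp: norm_exp)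
  moreover have fe: "(\<lambda>x. Re (std_normal_density x *\<^sub>R iexp (s * x))) = (\<lambda>x. std_normal_density x * cos (s * x))"
    by (rule ext) (simp add: Re_exp)
  ultimately show "integral\<^sup>L lborel (\<lambda>x. std_normal_density x * cos (s * x)) = exp (- (s^2) / 2)"
    by (metis fe)
qed

lemma gauss_cos:
  fixes t m :: real
  assumes t: "t > 0"
  shows "integrable lborel (\<lambda>b. exp (- pi * t * b^2) * cos (2 * pi * m * b))"
    and "integral\<^sup>L lborel (\<lambda>b. exp (- pi * t * b^2) * cos (2 * pi * m * b)) = exp (- pi * m^2 / t) / sqrt t"
proof -
  define c where "c = sqrt (2 * pi * t)"
  have c: "c > 0" using t by (simp add: c_def)
  define s where "s = 2 * pi * m / c"
  let ?F = "\<lambda>x. std_normal_density x * cos (s * x)"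
  have eq: "?F (c * b) = exp (- pi * t * b^2) * cos (2 * pi * m * b) / sqrt (2*pi)" for b
  proof -
    have "c^2 = 2 * pi * t" using t by (simp add: c_def)
    then have h1: "(c * b)^2 / 2 = pi * t * b^2" by (simp add: power_mult_distrib)
    have h2: "s * (c * b) = 2 * pi * m * b" using c by (simp add: s_def field_simps)
    have e1: "std_normal_density (c*b) = exp (- pi * t * b^2) / sqrt (2*pi)"
    proof -
      have "- ((c * b)^2) / 2 = - pi * t * b^2" using h1 by (simp add: field_simps)
      then show ?thesis unfolding std_normal_density_def by simp
    qed
    show ?thesis by (simp only: e1 h2) simp
  qed
  have intF: "integrable lborel (\<lambda>b. ?F (0 + c * b))"
    using gauss_cos_std[of s] c by (intro lborel_integrable_real_affine) auto
  then have "integrable lborel (\<lambda>b. sqrt (2*pi) * ?F (c * b))" by simp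
  then show "integrable lborel (\<lambda>b. exp (- pi * t * b^2) * cos (2 * pi * m * b))"
    by (simp only: eq) simp
  have "exp (- (s^2) / 2) = c * integral\<^sup>L lborel (\<lambda>b. ?F (0 + c * b))"
    using gauss_cos_std[of s] lborel_integral_real_affine[of c ?F 0] c by simp
  also have "\<dots> = c * integral\<^sup>L lborel (\<lambda>b. exp (- pi * t * b^2) * cos (2 * pi * m * b) / sqrt (2*pi))"
    by (simp only: add_0_left eq)
  also have "\<dots> = c / sqrt (2*pi) * integral\<^sup>L lborel (\<lambda>b. exp (- pi * t * b^2) * cos (2 * pi * m * b))"
    by simp
  finally have "integral\<^sup>L lborel (\<lambda>b. exp (- pi * t * b^2) * cos (2 * pi * m * b)) = sqrt (2*pi) / c * exp (- (s^2) / 2)"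
    using c by (simp add: field_simps)
  also have "sqrt (2*pi) / c = 1 / sqrt t" using t by (simp add: c_def real_sqrt_mult)
  finally have A: "integral\<^sup>L lborel (\<lambda>b. exp (- pi * t * b^2) * cos (2 * pi * m * b)) = 1 / sqrt t * exp (- (s^2) / 2)" .
  have B: "- (s^2) / 2 = - pi * m^2 / t"
  proof -
    have "c^2 = 2 * pi * t" using t by (simp add: c_def)
    then show ?thesis using t c by (simp add: s_def power_divide power_mult_distrib field_simps power2_eq_square)
  qed
  show "integral\<^sup>L lborel (\<lambda>b. exp (- pi * t * b^2) * cos (2 * pi * m * b)) = exp (- pi * m^2 / t) / sqrt t"
    unfolding A B by simp
qed


lemma gauss_cos_half:
  fixes t m :: real
  assumes t: "t > 0"
  shows "((\<lambda>b. exp (- pi * t * b^2) * cos (2 * pi * m * b)) has_integral (exp (- pi * m^2 / t) / sqrt t / 2)) {0..}"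
proof -
  define f where "f b = exp (- pi * t * b^2) * cos (2 * pi * m * b)" for b
  have int: "integrable lborel f" using gauss_cos(1)[OF t, of m] unfolding f_def[abs_def] .
  have val: "integral\<^sup>L lborel f = exp (- pi * m^2 / t) / sqrt t" using gauss_cos(2)[OF t, of m] unfolding f_def[abs_def] .
  have si: "set_integrable lborel A f" if "A \<in> sets lborel" for A
    unfolding set_integrable_def using that int by (intro integrable_mult_indicator) auto
  have P: "f integrable_on {0..}" "(LBINT x:{0..}. f x) = integral {0..} f"
    using set_borel_integral_eq_integral[OF si[of "{0..}"]] by auto
  have N: "f integrable_on {..0}" "(LBINT x:{..0}. f x) = integral {..0} f"
    using set_borel_integral_eq_integral[OF si[of "{..0}"]] by auto
  have even: "f (- x) = f x" for x by (simp add: f_def)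
  have "(LBINT x:{..0}. f x) = (LBINT x:{x. - x \<in> {..0::real}}. f (- x))"
    by (rule set_integral_reflect)
  also have "{x. - x \<in> {..0::real}} = {0..}" by auto
  finally have eqNP: "integral {..0} f = integral {0..} f" using P N by (simp add: even)
  have "(f has_integral (integral {..0} f + integral {0..} f)) ({..0} \<union> {0..})"
    by (rule has_integral_Un) (use P N in \<open>auto intro: integrable_integral negligible_subset[of "{0}"]\<close>)
  moreover have "{..0::real} \<union> {0..} = UNIV" by auto
  ultimately have A: "(f has_integral (2 * integral {0..} f)) UNIV" using eqNP by simp
  have B: "(f has_integral (integral\<^sup>L lborel f)) UNIV"
    by (rule has_integral_integral_real[OF int])
  have "2 * integral {0..} f = integral\<^sup>L lborel f"
    by (rule has_integral_unique[OF A B])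
  then have C: "integral {0..} f = exp (- pi * m^2 / t) / sqrt t / 2" using val by simp
  have "(f has_integral integral {0..} f) {0..}" by (rule integrable_integral[OF P(1)])
  then show ?thesis unfolding C unfolding f_def .
qed


lemma cos_shift_nat: "cos (y + real j * (2*pi)) = cos y"
proof (induction j)
  case 0 then show ?case by simp
next
  case (Suc j)
  have "cos (y + real (Suc j) * (2*pi)) = cos ((y + real j * (2*pi)) + 2*pi)"
    by (rule arg_cong[where f=cos]) (simp add: algebra_simps)
  also have "\<dots> = cos (y + real j * (2*pi))" by (rule cos_periodic)
  finally show ?case using Suc by simp
qed

lemma cos_per1: "cos (2*pi*real m*(real n + x)) = cos (2*pi*real m*x)"
proof -
  have "cos (2*pi*real m*(real n + x)) = cos (2*pi*real m*x + real (m*n) * (2*pi))"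
    by (rule arg_cong[where f=cos]) (simp add: algebra_simps)
  also have "\<dots> = cos (2*pi*real m*x)" by (rule cos_shift_nat)
  finally show ?thesis .
qed

lemma cos_per2: "cos (2*pi*real m*(real n - x)) = cos (2*pi*real m*x)"
proof -
  have "cos (2*pi*real m*(real n - x)) = cos (- (2*pi*real m*x) + real (m*n) * (2*pi))"
    by (rule arg_cong[where f=cos]) (simp add: algebra_simps)
  also have "\<dots> = cos (- (2*pi*real m*x))" by (rule cos_shift_nat)
  finally show ?thesis by simp
qed

lemma has_integral_cos_half:
  fixes n :: int
  shows "((\<lambda>a. cos (2*pi*real_of_int n*a)) has_integral (if n = 0 then 1/2 else 0)) {0..1/2}"
proof (cases "n = 0")
  case True
  then show ?thesis using has_integral_const_real[of "1::real" 0 "1/2"] by simp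
next
  case False
  have "((\<lambda>a. cos (2*pi*real_of_int n*a)) has_integral
          (sin (2*pi*real_of_int n*(1/2)) / (2*pi*real_of_int n) - sin (2*pi*real_of_int n*0) / (2*pi*real_of_int n))) {0..1/2}"
  proof (rule fundamental_theorem_of_calculus)
    show "((\<lambda>a. sin (2*pi*real_of_int n*a) / (2*pi*real_of_int n)) has_vector_derivative cos (2*pi*real_of_int n*x)) (at x within {0..1/2})"
      for x :: real
      using False unfolding has_vector_derivative_def
      by (intro derivative_eq_intros | force)+
  qed auto
  moreover have "sin (2*pi*real_of_int n*(1/2)) = 0"
    by (subst sin_zero_iff_int2) (auto intro!: exI[of _ n])
  ultimately show ?thesis using False by simp
qed

lemma cos_orth:
  fixes j m :: nat
  shows "((\<lambda>a. cos (2*pi*real j*a) * cos (2*pi*real m*a)) has_integral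
          (if j = m then (if m = 0 then 1/2 else 1/4) else 0)) {0..1/2}"
proof -
  have eq: "cos (2*pi*real j*a) * cos (2*pi*real m*a) =
        cos (2*pi*real_of_int (int j - int m)*a) / 2 + cos (2*pi*real_of_int (int j + int m)*a) / 2" for a
    by (simp add: cos_add cos_diff field_simps)
  have X: "((\<lambda>a. cos (2*pi*real_of_int (int j - int m)*a) / 2 + cos (2*pi*real_of_int (int j + int m)*a) / 2) has_integral
          ((if int j - int m = 0 then 1/2 else 0) / 2 + (if int j + int m = 0 then 1/2 else 0) / 2)) {0..1/2}"
    by (intro has_integral_add has_integral_divide has_integral_cos_half)
  have v: "((if int j - int m = 0 then 1/2 else 0) / 2 + (if int j + int m = 0 then 1/2 else 0) / 2) =
       (if j = m then (if m = 0 then 1/2 else 1/4) else (0::real))" by auto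
  show ?thesis unfolding eq using X[unfolded v] .
qed


definition pe :: "real \<Rightarrow> nat \<Rightarrow> real \<Rightarrow> real" where
  "pe t k a = exp (- pi * t * (real k + a)^2) + exp (- pi * t * (real k + 1 - a)^2)"

definition ph :: "real \<Rightarrow> nat \<Rightarrow> real \<Rightarrow> real" where
  "ph t k a = (if k = 0 then 1 else 2) * exp (- pi * (real k)^2 / t) * cos (2*pi*real k*a)"

definition gf :: "real \<Rightarrow> nat \<Rightarrow> real \<Rightarrow> real" where
  "gf t m b = exp (- pi * t * b^2) * cos (2*pi*real m*b)"

lemma nat_sq_ge: "real k \<le> (real k)^2"
  by (cases k) (auto simp: power2_eq_square)

lemma exp_le_geom:
  assumes t: "t > 0" and y: "real k \<le> y"
  shows "exp (- pi * t * y) \<le> exp (- pi * t) ^ k"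
proof -
  have "exp (- pi * t * y) \<le> exp (real k * (- pi * t))"
    using t y by (simp add: mult_left_mono)
  also have "\<dots> = exp (- pi * t) ^ k" by (rule exp_of_nat_mult)
  finally show ?thesis .
qed

lemma pe_bound:
  assumes t: "t > 0" and a: "a \<in> {0..1/2}"
  shows "\<bar>pe t k a\<bar> \<le> 2 * exp (- pi * t) ^ k"
proof -
  have "real k \<le> (real k)^2" by (rule nat_sq_ge)
  also have "(real k)^2 \<le> (real k + a)^2" using a by (intro power_mono) auto
  finally have 1: "exp (- pi * t * (real k + a)^2) \<le> exp (- pi * t) ^ k"
    by (rule exp_le_geom[OF t])
  have "real k \<le> (real k)^2" by (rule nat_sq_ge)
  also have "(real k)^2 \<le> (real k + 1 - a)^2" using a by (intro power_mono) auto
  finally have 2: "exp (- pi * t * (real k + 1 - a)^2) \<le> exp (- pi * t) ^ k"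
    by (rule exp_le_geom[OF t])
  show ?thesis unfolding pe_def using 1 2 by (simp add: abs_of_nonneg add_nonneg_nonneg)
qed

lemma ph_bound:
  assumes t: "t > 0"
  shows "\<bar>ph t k a\<bar> \<le> 2 * exp (- pi * (1/t)) ^ k"
proof -
  have "exp (- pi * (real k)^2 / t) = exp (- pi * (1/t) * (real k)^2)" by simp
  also have "\<dots> \<le> exp (- pi * (1/t)) ^ k"
    by (rule exp_le_geom) (use t nat_sq_ge in auto)
  finally have 1: "exp (- pi * (real k)^2 / t) \<le> exp (- pi * (1/t)) ^ k" .
  have "\<bar>ph t k a\<bar> \<le> 2 * exp (- pi * (real k)^2 / t) * 1"
    unfolding ph_def abs_mult by (intro mult_mono) auto
  then show ?thesis using 1 by simp
qed

lemma summable_geom2: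
  assumes "c > 0" shows "summable (\<lambda>k. 2 * exp (- pi * c) ^ k)"
  using assms by (intro summable_mult summable_geometric) auto

lemma pe_ulimit:
  assumes t: "t > 0"
  shows "uniform_limit {0..1/2} (\<lambda>N a. \<Sum>k<N. pe t k a * cos (2*pi*real m*a)) (\<lambda>a. \<Sum>k. pe t k a * cos (2*pi*real m*a)) sequentially"
proof (rule Weierstrass_m_test[OF _ summable_geom2[OF t]])
  fix k a assume a: "a \<in> {0..1/2::real}"
  have "\<bar>pe t k a * cos (2*pi*real m*a)\<bar> \<le> \<bar>pe t k a\<bar> * 1"
    unfolding abs_mult by (intro mult_left_mono) auto
  then show "norm (pe t k a * cos (2*pi*real m*a)) \<le> 2 * exp (- pi * t) ^ k"
    using pe_bound[OF t a, of k] by simp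
qed

lemma ph_ulimit:
  assumes t: "t > 0"
  shows "uniform_limit {0..1/2} (\<lambda>N a. \<Sum>k<N. ph t k a * cos (2*pi*real m*a)) (\<lambda>a. \<Sum>k. ph t k a * cos (2*pi*real m*a)) sequentially"
proof (rule Weierstrass_m_test[OF _ summable_geom2])
  fix k a
  have "\<bar>ph t k a * cos (2*pi*real m*a)\<bar> \<le> \<bar>ph t k a\<bar> * 1"
    unfolding abs_mult by (intro mult_left_mono) auto
  then show "norm (ph t k a * cos (2*pi*real m*a)) \<le> 2 * exp (- pi * (1/t)) ^ k"
    using ph_bound[OF t, of k a] by simp
qed (use t in auto)

lemma pe_summable: "t > 0 \<Longrightarrow> a \<in> {0..1/2} \<Longrightarrow> summable (\<lambda>k. pe t k a)"
  by (rule summable_comparison_test[OF _ summable_geom2[of t]]) (use pe_bound in fastforce)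

lemma ph_summable: "t > 0 \<Longrightarrow> summable (\<lambda>k. ph t k a)"
  by (rule summable_comparison_test[OF _ summable_geom2[of "1/t"]]) (use ph_bound in fastforce, simp)

lemma pe_cont:
  assumes t: "t > 0"
  shows "continuous_on {0..1/2} (\<lambda>a. \<Sum>k. pe t k a)"
proof -
  have "continuous_on {0..1/2} (\<lambda>a. \<Sum>k. pe t k a * cos (2*pi*real 0*a))"
    by (rule uniform_limit_theorem[OF _ pe_ulimit[OF t]])
       (auto intro!: always_eventually continuous_intros simp: pe_def)
  then show ?thesis by simp
qed

lemma ph_cont:
  assumes t: "t > 0"
  shows "continuous_on {0..1/2} (\<lambda>a. \<Sum>k. ph t k a)"
proof -
  have "continuous_on {0..1/2} (\<lambda>a. \<Sum>k. ph t k a * cos (2*pi*real 0*a))"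
    by (rule uniform_limit_theorem[OF _ ph_ulimit[OF t]])
       (auto intro!: always_eventually continuous_intros simp: ph_def)
  then show ?thesis by simp
qed


lemma gf_cont: "continuous_on S (gf t m)"
  unfolding gf_def by (intro continuous_intros)

lemma gf_int: "gf t m integrable_on {a..b}"
  by (rule integrable_continuous_interval[OF gf_cont])

lemma pe_coef:
  "integral {0..1/2} (\<lambda>a. pe t k a * cos (2*pi*real m*a)) = integral {real k..real k + 1} (gf t m)"
proof -
  have i1: "integral {0..1/2} (\<lambda>a. exp (- pi * t * (real k + a)^2) * cos (2*pi*real m*a)) =
        integral {real k..real k + 1/2} (gf t m)"
  proof -
    have "integral {0..1/2} (\<lambda>a. exp (- pi * t * (real k + a)^2) * cos (2*pi*real m*a)) =
          integral {0..1/2} (gf t m \<circ> (+) (real k))"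
      by (rule integral_cong) (simp only: gf_def comp_def cos_per1)
    also have "\<dots> = integral {0 + real k..1/2 + real k} (gf t m)"
      by (rule integral_shift_Icc_real)
    finally show ?thesis by (simp add: add.commute)
  qed
  have i2: "integral {0..1/2} (\<lambda>a. exp (- pi * t * (real k + 1 - a)^2) * cos (2*pi*real m*a)) =
        integral {real k + 1/2..real k + 1} (gf t m)"
  proof -
    have "integral {0..1/2} (\<lambda>a. exp (- pi * t * (real k + 1 - a)^2) * cos (2*pi*real m*a)) =
          integral {0..1/2} (\<lambda>a. (gf t m \<circ> (+) (real k + 1)) (- a))"
    proof (rule integral_cong)
      fix a :: real
      have "cos (2*pi*real m*(real k + 1 - a)) = cos (2*pi*real m*a)" by (metis cos_per2 of_nat_Suc add.commute)
      then show "exp (- pi * t * (real k + 1 - a)^2) * cos (2*pi*real m*a) = (gf t m \<circ> (+) (real k + 1)) (- a)"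
        by (simp add: gf_def)
    qed
    also have "\<dots> = integral {-1/2..0} (gf t m \<circ> (+) (real k + 1))"
      using Henstock_Kurzweil_Integration.integral_reflect_real[where a="-1/2" and b=0 and f="gf t m \<circ> (+) (real k + 1)"] by simp
    also have "\<dots> = integral {-1/2 + (real k + 1)..0 + (real k + 1)} (gf t m)"
      by (rule integral_shift_Icc_real)
    finally show ?thesis by (simp add: add.commute)
  qed
  have "integral {0..1/2} (\<lambda>a. pe t k a * cos (2*pi*real m*a)) =
        integral {0..1/2} (\<lambda>a. exp (- pi * t * (real k + a)^2) * cos (2*pi*real m*a)) +
        integral {0..1/2} (\<lambda>a. exp (- pi * t * (real k + 1 - a)^2) * cos (2*pi*real m*a))"
    unfolding pe_def distrib_right
    by (rule integral_add; rule integrable_continuous_interval; intro continuous_intros)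
  also have "\<dots> = integral {real k..real k + 1} (gf t m)"
    unfolding i1 i2 by (rule Henstock_Kurzweil_Integration.integral_combine) (auto intro: gf_int)
  finally show ?thesis .
qed

lemma gf_sum: "(\<Sum>k<N. integral {real k..real k + 1} (gf t m)) = integral {0..real N} (gf t m)"
proof (induction N)
  case 0 then show ?case by simp
next
  case (Suc N)
  have "(\<Sum>k<Suc N. integral {real k..real k + 1} (gf t m)) =
        integral {0..real N} (gf t m) + integral {real N..real N + 1} (gf t m)"
    using Suc by simp
  also have "\<dots> = integral {0..real N + 1} (gf t m)"
    by (rule Henstock_Kurzweil_Integration.integral_combine[where a=0 and c="real N" and b="real N + 1" and f="gf t m"]) (auto intro: gf_int)
  finally show ?case by (simp add: add.commute)
qed

lemma gf_lim:
  assumes t: "t > 0"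
  shows "(\<lambda>N. integral {0..real N} (gf t m)) \<longlonglongrightarrow> exp (- pi * (real m)^2 / t) / sqrt t / 2"
proof -
  define fN where "fN N x = (if x \<in> {0..real N} then gf t m x else 0)" for N x
  have hint: "(\<lambda>b. exp (- pi * t * b^2)) integrable_on {0..}"
    using gauss_cos_half[OF t, of 0] by (auto simp: integrable_on_def)
  have full: "(gf t m has_integral (exp (- pi * (real m)^2 / t) / sqrt t / 2)) {0..}"
    using gauss_cos_half[OF t, of "real m"] unfolding gf_def by simp
  have fNi: "integral {0..} (fN N) = integral {0..real N} (gf t m)" for N
    unfolding fN_def integral_restrict_Int by (simp add: Int_absorb2 Int_commute)
  have fNint: "fN N integrable_on {0..}" for N
  proof -
    have "(gf t m has_integral integral {0..real N} (gf t m)) ({0..real N} \<inter> {0..})"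
      using gf_int[of t m 0 "real N"] by (simp add: Int_absorb2 integrable_integral)
    then show ?thesis unfolding fN_def has_integral_restrict_Int[symmetric] integrable_on_def by blast
  qed
  have "(\<lambda>N. integral {0..} (fN N)) \<longlonglongrightarrow> integral {0..} (gf t m)"
  proof (rule dominated_convergence(2)[OF fNint hint])
    fix N :: nat and x :: real assume "x \<in> {0..}"
    show "norm (fN N x) \<le> exp (- pi * t * x^2)"
      unfolding fN_def gf_def by (auto simp: abs_mult intro!: mult_left_le)
  next
    fix x :: real assume x: "x \<in> {0..}"
    obtain n where n: "x \<le> real n" using real_arch_simple by blast
    have "eventually (\<lambda>N. fN N x = gf t m x) sequentially"
      using eventually_ge_at_top[of n] by eventually_elim (use x n in \<open>auto simp: fN_def\<close>)
    then show "(\<lambda>N. fN N x) \<longlonglongrightarrow> gf t m x"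
      by (rule tendsto_eventually)
  qed
  then show ?thesis using full fNi integral_unique[OF full] by simp
qed

lemma G_coef:
  assumes t: "t > 0"
  shows "integral {0..1/2} (\<lambda>a. (\<Sum>k. pe t k a) * cos (2*pi*real m*a)) = exp (- pi * (real m)^2 / t) / sqrt t / 2"
proof -
  obtain I J where I: "\<And>N. ((\<lambda>a. \<Sum>k<N. pe t k a * cos (2*pi*real m*a)) has_integral I N) {0..1/2}"
    and J: "((\<lambda>a. \<Sum>k. pe t k a * cos (2*pi*real m*a)) has_integral J) {0..1/2}"
    and IJ: "I \<longlonglongrightarrow> J"
    by (rule uniform_limit_integral[OF pe_ulimit[OF t]])
       (auto intro!: continuous_intros simp: pe_def)
  have "I N = integral {0..real N} (gf t m)" for N
  proof -
    have "I N = integral {0..1/2} (\<lambda>a. \<Sum>k<N. pe t k a * cos (2*pi*real m*a))"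
      by (rule integral_unique[symmetric, OF I])
    also have "\<dots> = (\<Sum>k<N. integral {0..1/2} (\<lambda>a. pe t k a * cos (2*pi*real m*a)))"
      by (rule integral_sum) (auto intro!: integrable_continuous_interval continuous_intros simp: pe_def)
    also have "\<dots> = integral {0..real N} (gf t m)" by (simp add: pe_coef gf_sum)
    finally show ?thesis .
  qed
  then have Ieq: "I = (\<lambda>N. integral {0..real N} (gf t m))" by (rule ext)
  have "I \<longlonglongrightarrow> exp (- pi * (real m)^2 / t) / sqrt t / 2"
    unfolding Ieq by (rule gf_lim[OF t])
  then have JV: "J = exp (- pi * (real m)^2 / t) / sqrt t / 2" using IJ LIMSEQ_unique by blast
  have "integral {0..1/2} (\<lambda>a. (\<Sum>k. pe t k a) * cos (2*pi*real m*a)) =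
        integral {0..1/2} (\<lambda>a. \<Sum>k. pe t k a * cos (2*pi*real m*a))"
    by (rule integral_cong) (use pe_summable[OF t] in \<open>simp add: suminf_mult2\<close>)
  also have "\<dots> = J" using J by (rule integral_unique)
  finally show ?thesis using JV by simp
qed

lemma ph_coef:
  "integral {0..1/2} (\<lambda>a. ph t k a * cos (2*pi*real m*a)) = (if k = m then exp (- pi * (real m)^2 / t) / 2 else 0)"
proof -
  have "((\<lambda>a. ((if k = 0 then 1 else 2) * exp (- pi * (real k)^2 / t)) * (cos (2*pi*real k*a) * cos (2*pi*real m*a))) has_integral
        ((if k = 0 then 1 else 2) * exp (- pi * (real k)^2 / t)) * (if k = m then (if m = 0 then 1/2 else 1/4) else 0)) {0..1/2}"
    by (intro has_integral_mult_right cos_orth)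
  then have "((\<lambda>a. ph t k a * cos (2*pi*real m*a)) has_integral (if k = m then exp (- pi * (real m)^2 / t) / 2 else 0)) {0..1/2}"
    by (simp add: ph_def mult.assoc split: if_splits)
  then show ?thesis by (rule integral_unique)
qed

lemma H_coef:
  assumes t: "t > 0"
  shows "integral {0..1/2} (\<lambda>a. (\<Sum>k. ph t k a) * cos (2*pi*real m*a)) = exp (- pi * (real m)^2 / t) / 2"
proof -
  obtain I J where I: "\<And>N. ((\<lambda>a. \<Sum>k<N. ph t k a * cos (2*pi*real m*a)) has_integral I N) {0..1/2}"
    and J: "((\<lambda>a. \<Sum>k. ph t k a * cos (2*pi*real m*a)) has_integral J) {0..1/2}"
    and IJ: "I \<longlonglongrightarrow> J"
    by (rule uniform_limit_integral[OF ph_ulimit[OF t]])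
       (auto intro!: continuous_intros simp: ph_def)
  have "I N = (\<Sum>k<N. (if k = m then exp (- pi * (real m)^2 / t) / 2 else 0))" for N
  proof -
    have "I N = integral {0..1/2} (\<lambda>a. \<Sum>k<N. ph t k a * cos (2*pi*real m*a))"
      by (rule integral_unique[symmetric, OF I])
    also have "\<dots> = (\<Sum>k<N. integral {0..1/2} (\<lambda>a. ph t k a * cos (2*pi*real m*a)))"
      by (rule integral_sum) (auto intro!: integrable_continuous_interval continuous_intros simp: ph_def)
    also have "\<dots> = (\<Sum>k<N. (if k = m then exp (- pi * (real m)^2 / t) / 2 else 0))" by (simp add: ph_coef)
    finally show ?thesis .
  qed
  then have Ieq: "I = (\<lambda>N. (\<Sum>k<N. (if k = m then exp (- pi * (real m)^2 / t) / 2 else 0)))" by (rule ext)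
  have "(\<lambda>k. if k = m then exp (- pi * (real m)^2 / t) / 2 else 0) sums (exp (- pi * (real m)^2 / t) / 2)"
    using sums_single[of m "\<lambda>_. exp (- pi * (real m)^2 / t) / 2"] by simp
  then have "I \<longlonglongrightarrow> exp (- pi * (real m)^2 / t) / 2"
    unfolding sums_def Ieq .
  then have JV: "J = exp (- pi * (real m)^2 / t) / 2" using IJ LIMSEQ_unique by blast
  have "integral {0..1/2} (\<lambda>a. (\<Sum>k. ph t k a) * cos (2*pi*real m*a)) =
        integral {0..1/2} (\<lambda>a. \<Sum>k. ph t k a * cos (2*pi*real m*a))"
    by (rule integral_cong) (use ph_summable[OF t] in \<open>simp add: suminf_mult2\<close>)
  also have "\<dots> = J" using J by (rule integral_unique)
  finally show ?thesis using JV by simp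
qed

theorem poisson_half:
  assumes t: "t > 0" and a: "a \<in> {0..1/2}"
  shows "(\<Sum>k. pe t k a) = (\<Sum>k. ph t k a) / sqrt t"
proof -
  define \<phi> where "\<phi> a = (\<Sum>k. pe t k a) - (\<Sum>k. ph t k a) / sqrt t" for a
  have c: "continuous_on {0..1/2} \<phi>"
    unfolding \<phi>_def by (intro continuous_intros pe_cont ph_cont t) (use t in auto)
  have "integral {0..1/2} (\<lambda>a. \<phi> a * cos (2*pi*real m*a)) = 0" for m
  proof -
    have "integral {0..1/2} (\<lambda>a. \<phi> a * cos (2*pi*real m*a)) =
          integral {0..1/2} (\<lambda>a. (\<Sum>k. pe t k a) * cos (2*pi*real m*a)) -
          integral {0..1/2} (\<lambda>a. (\<Sum>k. ph t k a) * cos (2*pi*real m*a)) / sqrt t"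
    proof -
      have "integral {0..1/2} (\<lambda>a. \<phi> a * cos (2*pi*real m*a)) =
          integral {0..1/2} (\<lambda>a. (\<Sum>k. pe t k a) * cos (2*pi*real m*a) - ((\<Sum>k. ph t k a) * cos (2*pi*real m*a)) / sqrt t)"
        by (rule integral_cong) (simp add: \<phi>_def algebra_simps)
      also have "\<dots> = integral {0..1/2} (\<lambda>a. (\<Sum>k. pe t k a) * cos (2*pi*real m*a)) -
          integral {0..1/2} (\<lambda>a. ((\<Sum>k. ph t k a) * cos (2*pi*real m*a)) / sqrt t)"
        by (rule integral_diff; rule integrable_continuous_interval; intro continuous_intros pe_cont ph_cont t; use t in simp)
      also have "integral {0..1/2} (\<lambda>a. ((\<Sum>k. ph t k a) * cos (2*pi*real m*a)) / sqrt t) =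
          integral {0..1/2} (\<lambda>a. (\<Sum>k. ph t k a) * cos (2*pi*real m*a)) / sqrt t"
        by (rule integral_divide)
      finally show ?thesis .
    qed
    also have "\<dots> = 0" using G_coef[OF t, of m] H_coef[OF t, of m] t by (simp add: field_simps)
    finally show ?thesis .
  qed
  then have "\<phi> a = 0" using fourier_unique[OF c _ a] by blast
  then show ?thesis by (simp add: \<phi>_def)
qed


definition cth :: "nat \<Rightarrow> real" where "cth k = (if k = 0 then 1 else 2) * (-1)^k"
definition th :: "real \<Rightarrow> real" where "th q = (\<Sum>k. cth k * q^(k^2))"
definition Tq :: "real \<Rightarrow> real" where "Tq q = (\<Sum>k. q^((2*k+1)^2))"
definition Aq :: "real \<Rightarrow> real" where "Aq q = (\<Sum>k. real (Suc k) * q^((Suc k)^2))"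
definition Bq :: "real \<Rightarrow> real" where "Bq q = (\<Sum>k. real (Suc k) * q^(4*(Suc k)^2))"

lemma abs_cth: "\<bar>cth k\<bar> \<le> 2" by (simp add: cth_def abs_mult power_abs)

lemma k_le_sq: "k \<le> k^2" for k :: nat
  by (simp add: power2_eq_square)

lemma pow_le_geom: "0 \<le> q \<Longrightarrow> q \<le> 1 \<Longrightarrow> k \<le> n \<Longrightarrow> q^n \<le> q^k" for q :: real
  by (rule power_decreasing)

lemma summable_geom_c: "0 \<le> q \<Longrightarrow> q < 1 \<Longrightarrow> summable (\<lambda>k. c * q^k)" for q c :: real
  by (intro summable_mult summable_geometric) auto

lemma th_summable: assumes "0 \<le> q" "q \<le> 1/2" shows "summable (\<lambda>k. cth k * q^(k^2))"
proof (rule summable_comparison_test[OF _ summable_geom_c[of q 2]])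
  show "\<exists>N. \<forall>n\<ge>N. norm (cth n * q^(n^2)) \<le> 2 * q^n"
    using assms abs_cth by (auto simp: abs_mult intro!: mult_mono pow_le_geom k_le_sq)
qed (use assms in auto)

lemma Tq_summable: assumes "0 \<le> (q::real)" "q \<le> 1/2" shows "summable (\<lambda>k. q^((2*k+1)^2))"
proof (rule summable_comparison_test[OF _ summable_geom_c[of q 1]])
  have "k \<le> (2*k+1)^2" for k :: nat by (simp add: power2_eq_square)
  then show "\<exists>N. \<forall>n\<ge>N. norm (q^((2*n+1)^2)) \<le> 1 * q^n"
    using assms by (auto intro!: pow_le_geom)
qed (use assms in auto)

lemma suc_le_pow2: "real (Suc k) \<le> 2^k"
proof (induction k)
  case 0 then show ?case by simp
next
  case (Suc k) then show ?case by simp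
qed

lemma Aq_term: assumes "0 \<le> q" "q \<le> 1/4"
  shows "real (Suc k) * q^((Suc k)^2) \<le> q * (1/2)^k"
proof -
  have e: "(Suc k)^2 = 1 + (k^2 + 2*k)" by (simp add: power2_eq_square)
  have "q^((Suc k)^2) = q * q^(k^2 + 2*k)" unfolding e power_add by simp
  also have "\<dots> \<le> q * q^k" using assms by (intro mult_left_mono pow_le_geom) auto
  finally have 1: "q^((Suc k)^2) \<le> q * q^k" .
  have "real (Suc k) * q^((Suc k)^2) \<le> 2^k * (q * q^k)"
    using 1 suc_le_pow2[of k] assms by (intro mult_mono) auto
  also have "\<dots> = q * (2*q)^k" by (simp add: power_mult_distrib)
  also have "\<dots> \<le> q * (1/2)^k" using assms by (intro mult_left_mono power_mono) auto
  finally show ?thesis .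
qed

lemma Bq_term: assumes "0 \<le> q" "q \<le> 1/4"
  shows "real (Suc k) * q^(4*(Suc k)^2) \<le> q^4 * (1/2)^k"
proof -
  have e: "4*(Suc k)^2 = 4 + (4*k^2 + 8*k)" by (simp add: power2_eq_square)
  have "q^(4*(Suc k)^2) = q^4 * q^(4*k^2 + 8*k)" unfolding e power_add by simp
  also have "\<dots> \<le> q^4 * q^k" using assms by (intro mult_left_mono pow_le_geom) auto
  finally have 1: "q^(4*(Suc k)^2) \<le> q^4 * q^k" .
  have "real (Suc k) * q^(4*(Suc k)^2) \<le> 2^k * (q^4 * q^k)"
    using 1 suc_le_pow2[of k] assms by (intro mult_mono) auto
  also have "\<dots> = q^4 * (2*q)^k" by (simp add: power_mult_distrib)
  also have "\<dots> \<le> q^4 * (1/2)^k" using assms by (intro mult_left_mono power_mono) auto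
  finally show ?thesis .
qed

lemma Aq_summable: assumes "0 \<le> q" "q \<le> 1/4" shows "summable (\<lambda>k. real (Suc k) * q^((Suc k)^2))"
  by (rule summable_comparison_test[OF _ summable_geom_c[of "1/2" q]]) (use assms Aq_term in auto)

lemma Bq_summable: assumes "0 \<le> q" "q \<le> 1/4" shows "summable (\<lambda>k. real (Suc k) * q^(4*(Suc k)^2))"
  by (rule summable_comparison_test[OF _ summable_geom_c[of "1/2" "q^4"]]) (use assms Bq_term in auto)

lemma geom_half_sum: "(\<Sum>k. c * (1/2::real)^k) = 2 * c"
  using suminf_geometric[of "1/2::real"] by (simp add: suminf_mult)

lemma Aq_le: assumes "0 \<le> q" "q \<le> 1/4" shows "Aq q \<le> 2 * q"
proof -
  have "Aq q \<le> (\<Sum>k. q * (1/2)^k)"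
    unfolding Aq_def by (rule suminf_le) (use assms Aq_term Aq_summable summable_geom_c[of "1/2" q] in auto)
  then show ?thesis by (simp add: geom_half_sum)
qed

lemma Bq_le: assumes "0 \<le> q" "q \<le> 1/4" shows "Bq q \<le> 2 * q^4"
proof -
  have "Bq q \<le> (\<Sum>k. q^4 * (1/2)^k)"
    unfolding Bq_def by (rule suminf_le) (use assms Bq_term Bq_summable summable_geom_c[of "1/2" "q^4"] in auto)
  then show ?thesis by (simp add: geom_half_sum)
qed

lemma Aq_nonneg: "0 \<le> q \<Longrightarrow> q \<le> 1/4 \<Longrightarrow> 0 \<le> Aq q"
  unfolding Aq_def by (intro suminf_nonneg Aq_summable) auto

lemma Bq_nonneg: "0 \<le> q \<Longrightarrow> q \<le> 1/4 \<Longrightarrow> 0 \<le> Bq q"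
  unfolding Bq_def by (intro suminf_nonneg Bq_summable) auto

lemma Tq_nonneg: "0 \<le> q \<Longrightarrow> q \<le> 1/4 \<Longrightarrow> 0 \<le> Tq q"
  unfolding Tq_def by (intro suminf_nonneg Tq_summable) auto

lemma Tq_mono: "0 \<le> q \<Longrightarrow> q \<le> q0 \<Longrightarrow> q0 \<le> 1/4 \<Longrightarrow> Tq q \<le> Tq q0"
  unfolding Tq_def by (rule suminf_le) (use Tq_summable[of q] Tq_summable[of q0] in \<open>auto intro!: power_mono\<close>)


lemma pow_diff_le:
  fixes q q0 :: real
  assumes "0 \<le> q" "q \<le> q0"
  shows "q0^(Suc n) - q^(Suc n) \<le> real (Suc n) * q0^n * (q0 - q)"
proof (induction n)
  case 0 then show ?case by simp
next
  case (Suc n)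
  have "q0^(Suc (Suc n)) - q^(Suc (Suc n)) = q0 * (q0^(Suc n) - q^(Suc n)) + q^(Suc n) * (q0 - q)"
    by (simp add: algebra_simps)
  also have "\<dots> \<le> q0 * (real (Suc n) * q0^n * (q0 - q)) + q0^(Suc n) * (q0 - q)"
    using Suc assms by (intro add_mono mult_left_mono mult_right_mono power_mono) auto
  also have "\<dots> = real (Suc (Suc n)) * q0^(Suc n) * (q0 - q)" by (simp add: algebra_simps)
  finally show ?case .
qed

lemma pow_mono_diff: "0 \<le> q \<Longrightarrow> q \<le> q0 \<Longrightarrow> q^n \<le> q0^n" for q q0 :: real
  by (rule power_mono)

lemma sq_le_pow4: "real ((k+2)^2) \<le> 4^(k+1)"
proof (induction k)
  case 0 then show ?case by simp
next
  case (Suc k)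
  have "real ((Suc k + 2)^2) \<le> 4 * real ((k+2)^2)" by (simp add: power2_eq_square)
  also have "\<dots> \<le> 4 * 4^(k+1)" using Suc by simp
  finally show ?case by simp
qed

lemma tail_term:
  fixes q q0 :: real
  assumes q: "0 \<le> q" "q \<le> q0" "q0 \<le> 1/4"
  shows "\<bar>cth (k+2) * (q^((k+2)^2) - q0^((k+2)^2))\<bar> \<le> 2 * (q0 - q) * (1/16)^(k+1)"
proof -
  have e: "(k+2)^2 = Suc (k^2 + 4*k + 3)" by (simp add: power2_eq_square)
  have d0: "0 \<le> q0^((k+2)^2) - q^((k+2)^2)" using q by (simp add: power_mono)
  have "q0^((k+2)^2) - q^((k+2)^2) \<le> real ((k+2)^2) * q0^(k^2 + 4*k + 3) * (q0 - q)"
    using pow_diff_le[OF q(1,2), of "k^2 + 4*k + 3"] unfolding e by simp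
  also have "\<dots> \<le> 4^(k+1) * (1/64)^(k+1) * (q0 - q)"
  proof (intro mult_right_mono mult_mono sq_le_pow4)
    have "q0^(k^2 + 4*k + 3) \<le> q0^(3*(k+1))"
      using q by (intro power_decreasing) auto
    also have "\<dots> = (q0^3)^(k+1)" by (rule power_mult)
    also have "\<dots> \<le> (1/64)^(k+1)"
    proof -
      have "q0^3 \<le> (1/4)^3" using q by (intro power_mono) auto
      then have "q0^3 \<le> 1/64" by (simp add: power_divide)
      then show ?thesis using q by (intro power_mono) auto
    qed
    finally show "q0^(k^2 + 4*k + 3) \<le> (1/64)^(k+1)" .
  qed (use q in auto)
  also have "\<dots> = (1/16)^(k+1) * (q0 - q)"
    by (simp add: power_mult_distrib[symmetric])
  finally have 1: "q0^((k+2)^2) - q^((k+2)^2) \<le> (1/16)^(k+1) * (q0 - q)" .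
  have "\<bar>cth (k+2) * (q^((k+2)^2) - q0^((k+2)^2))\<bar> \<le> 2 * (q0^((k+2)^2) - q^((k+2)^2))"
  proof -
    have "\<bar>cth (k+2) * (q^((k+2)^2) - q0^((k+2)^2))\<bar> = \<bar>cth (k+2)\<bar> * (q0^((k+2)^2) - q^((k+2)^2))"
      using d0 by (simp add: abs_mult abs_minus_commute)
    also have "\<dots> \<le> 2 * (q0^((k+2)^2) - q^((k+2)^2))"
      by (rule mult_right_mono[OF abs_cth d0])
    finally show ?thesis .
  qed
  also have "\<dots> \<le> 2 * ((1/16)^(k+1) * (q0 - q))" using 1 by (rule mult_left_mono) simp
  finally show ?thesis by (simp only: mult_ac)
qed

lemma th_diff:
  fixes q q0 :: real
  assumes q: "0 \<le> q" "q \<le> q0" "q0 \<le> 1/4"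
  shows "\<bar>th q - th q0 - 2 * (q0 - q)\<bar> \<le> 2/15 * (q0 - q)"
proof -
  define d where "d k = cth k * (q^(k^2) - q0^(k^2))" for k
  have s1: "summable (\<lambda>k. cth k * q^(k^2))" using q by (intro th_summable) auto
  have s2: "summable (\<lambda>k. cth k * q0^(k^2))" using q by (intro th_summable) auto
  have sd: "summable d" unfolding d_def right_diff_distrib using s1 s2 by (rule summable_diff)
  have "th q - th q0 = suminf d"
    unfolding th_def d_def right_diff_distrib using suminf_diff[OF s1 s2] by simp
  also have "\<dots> = (\<Sum>k. d (k+2)) + sum d {..<2}"
    by (rule suminf_split_initial_segment[OF sd])
  also have "sum d {..<2} = 2 * (q0 - q)"
    by (simp add: d_def cth_def numeral_2_eq_2)
  finally have eq: "th q - th q0 - 2 * (q0 - q) = (\<Sum>k. d (k+2))" by simp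
  have sg: "summable (\<lambda>k. 2 * (q0 - q) * (1/16::real)^(k+1))"
    by (intro summable_mult summable_mult2 summable_geometric[THEN summable_ignore_initial_segment[where k=1], simplified]) auto
  have tb: "\<bar>d (k+2)\<bar> \<le> 2 * (q0 - q) * (1/16)^(k+1)" for k
    unfolding d_def by (rule tail_term[OF q])
  have sa: "summable (\<lambda>k. \<bar>d (k+2)\<bar>)"
    by (rule summable_comparison_test[OF _ sg]) (use tb in auto)
  have "\<bar>\<Sum>k. d (k+2)\<bar> \<le> (\<Sum>k. \<bar>d (k+2)\<bar>)" by (rule summable_rabs[OF sa])
  also have "\<dots> \<le> (\<Sum>k. 2 * (q0 - q) * (1/16)^(k+1))"
    by (rule suminf_le[OF tb sa sg])
  also have "(\<Sum>k. 2 * (q0 - q) * (1/16::real)^(k+1)) = 2 * (q0 - q) * (\<Sum>k. (1/16::real)^(k+1))"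
    by (rule suminf_mult) (rule summable_geometric[THEN summable_ignore_initial_segment[where k=1]]; simp)
  also have "(\<Sum>k. (1/16::real)^(k+1)) = 1/15"
  proof -
    have "(\<lambda>k. (1/16::real)^(k+1)) = (\<lambda>k. 1/16 * (1/16)^k)" by auto
    then have "(\<Sum>k. (1/16::real)^(k+1)) = (\<Sum>k. 1/16 * (1/16::real)^k)" by simp
    also have "\<dots> = (1/16) * (\<Sum>k. (1/16::real)^k)"
      by (rule suminf_mult) (rule summable_geometric; simp)
    also have "\<dots> = 1/15" by (simp add: suminf_geometric)
    finally show ?thesis .
  qed
  finally show ?thesis unfolding eq by simp
qed


lemma th_0: "th 0 = 1"
proof -
  have "(\<lambda>k. cth k * 0^(k^2)) = (\<lambda>k. if k = 0 then (\<lambda>_. 1::real) k else 0)"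
    by (auto simp: cth_def fun_eq_iff)
  moreover have "(\<lambda>k. if k = 0 then (\<lambda>_. 1::real) k else 0) sums 1"
    using sums_single[of 0 "\<lambda>_. 1::real"] by simp
  ultimately show ?thesis unfolding th_def by (simp add: sums_iff)
qed

lemma key_ineq:
  fixes q q0 :: real
  assumes q: "0 < q" "q < q0" "q0 \<le> 1/4" and eq0: "(th q0)^2 = 8 * (Tq q0)^2"
  shows "16 * ln (q0 / q) * Aq q * Bq q + 8 * (Tq q)^2 < (th q)^2"
proof -
  have d1: "th q - th q0 \<ge> 28/15 * (q0 - q)"
  proof -
    have "\<bar>th q - th q0 - 2 * (q0 - q)\<bar> \<le> 2/15 * (q0 - q)" using th_diff[of q q0] q by auto
    then show ?thesis by (simp only: abs_le_iff) linarith
  qed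
  have "\<bar>th 0 - th q0 - 2 * (q0 - 0)\<bar> \<le> 2/15 * (q0 - 0)"
    using th_diff[of 0 q0] q by auto
  then have "\<bar>1 - th q0 - 2 * q0\<bar> \<le> 2/15 * q0" by (simp add: th_0)
  then have d2: "th q0 \<ge> 7/15" using q by (simp only: abs_le_iff) linarith
  have "28/15 * (q0 - q) \<ge> 0" using q by simp
  then have s: "th q + th q0 \<ge> 14/15" using d1 d2 by linarith
  have "(th q)^2 - (th q0)^2 = (th q - th q0) * (th q + th q0)" by (simp add: power2_eq_square algebra_simps)
  also have "\<dots> \<ge> (28/15 * (q0 - q)) * (14/15)"
    using d1 s q by (intro mult_mono) auto
  finally have L1: "(th q)^2 - (th q0)^2 \<ge> 392/225 * (q0 - q)" by simp
  have T: "(Tq q)^2 \<le> (Tq q0)^2"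
    using Tq_mono[of q q0] Tq_nonneg[of q] q by (intro power_mono) auto
  have L: "(th q)^2 - 8 * (Tq q)^2 \<ge> 392/225 * (q0 - q)" using L1 T eq0 by linarith
  have ln1: "ln (q0 / q) \<le> (q0 - q) / q"
  proof -
    have "ln (q0 / q) \<le> q0 / q - 1" using q by (intro ln_le_minus_one) auto
    also have "\<dots> = (q0 - q) / q" using q by (simp add: field_simps)
    finally show ?thesis .
  qed
  have ln0: "ln (q0 / q) \<ge> 0" using q by simp
  have A: "Aq q \<le> 2 * q" "Aq q \<ge> 0" using Aq_le[of q] Aq_nonneg[of q] q by auto
  have B: "Bq q \<le> 2 * q^4" "Bq q \<ge> 0" using Bq_le[of q] Bq_nonneg[of q] q by auto
  have q4: "q^4 \<le> 1/256"
  proof -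
    have "q^4 \<le> (1/4)^4" using q by (intro power_mono) auto
    then show ?thesis by (simp add: power_divide)
  qed
  have "16 * ln (q0 / q) * Aq q * Bq q \<le> 16 * ((q0 - q) / q) * (2 * q) * (2 * q^4)"
    using ln1 ln0 A B q by (intro mult_mono) auto
  also have "\<dots> = 64 * q^4 * (q0 - q)" using q by (simp add: field_simps)
  also have "\<dots> \<le> 64 * (1/256) * (q0 - q)" using q4 q by (intro mult_mono) auto
  finally have R: "16 * ln (q0 / q) * Aq q * Bq q \<le> 1/4 * (q0 - q)" by simp
  have "1/4 * (q0 - q) < 392/225 * (q0 - q)" using q by (intro mult_strict_right_mono) auto
  then show ?thesis using L R by linarith
qed


lemma has_sum_int_split:
  fixes f :: "int \<Rightarrow> real"
  assumes s1: "summable (\<lambda>k. \<bar>f (int k)\<bar>)" and s2: "summable (\<lambda>k. \<bar>f (- int k - 1)\<bar>)"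
  shows "(f has_sum ((\<Sum>k. f (int k)) + (\<Sum>k. f (- int k - 1)))) UNIV"
proof -
  have h1: "((\<lambda>k. f (int k)) has_sum (\<Sum>k. f (int k))) UNIV"
    using s1 by (intro norm_summable_imp_has_sum) (auto intro: summable_sums summable_rabs_cancel)
  have h2: "((\<lambda>k. f (- int k - 1)) has_sum (\<Sum>k. f (- int k - 1))) UNIV"
    using s2 by (intro norm_summable_imp_has_sum) (auto intro: summable_sums summable_rabs_cancel)
  have i1: "inj_on int UNIV" by (simp add: inj_on_def)
  have i2: "inj_on (\<lambda>k::nat. - int k - 1) UNIV" by (simp add: inj_on_def)
  have H1: "(f has_sum (\<Sum>k. f (int k))) (range int)"
    using has_sum_reindex[OF i1, of f] h1 by (simp add: comp_def)
  have H2: "(f has_sum (\<Sum>k. f (- int k - 1))) (range (\<lambda>k::nat. - int k - 1))"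
    using has_sum_reindex[OF i2, of f] h2 by (simp add: comp_def)
  have disj: "range int \<inter> range (\<lambda>k::nat. - int k - 1) = {}" by auto
  have un: "range int \<union> range (\<lambda>k::nat. - int k - 1) = UNIV"
  proof -
    have "n \<in> range int \<union> range (\<lambda>k::nat. - int k - 1)" for n :: int
    proof (cases "n \<ge> 0")
      case True then have "n = int (nat n)" by simp
      then show ?thesis by blast
    next
      case False then have "n = - int (nat (- n - 1)) - 1" by simp
      then show ?thesis by blast
    qed
    then show ?thesis by blast
  qed
  show ?thesis using has_sum_Un_disjoint[OF H1 H2 disj] un by simp
qed

lemma exp_pow_q: "exp (- pi * x / 2) ^ n = exp (- pi * x / 2 * real n)"
  by (simp add: exp_of_nat_mult[symmetric] mult.commute)


lemma theta2_val:
  fixes x :: real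
  assumes x: "x > 0" and q: "exp (- pi * x / 2) \<le> 1/4"
  shows "theta2 0 (2 * \<i> * complex_of_real x) = complex_of_real (2 * Tq (exp (- pi * x / 2)))"
proof -
  define q where "q = exp (- pi * x / 2)"
  define g where "g n = exp (- 2 * pi * x * (real_of_int n + 1/2)^2)" for n :: int
  have tm: "exp (pi * \<i> * (2 * \<i> * complex_of_real x) * (of_int n + 1/2)^2) * exp (2 * \<i> * 0 * (of_int n + 1/2))
      = complex_of_real (g n)" for n :: int
  proof -
    have gen: "a * \<i> * (2 * \<i> * b) * w = - 2 * a * b * w" for a b w :: complex
    proof -
      have "a * \<i> * (2 * \<i> * b) * w = (\<i> * \<i>) * (2 * a * b * w)" by (simp only: mult_ac)
      then show ?thesis by simp
    qed
    have e1: "complex_of_real (- 2 * pi * x * (real_of_int n + 1/2)^2) = - 2 * complex_of_real pi * complex_of_real x * (of_int n + 1/2)^2"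
      by simp
    have "pi * \<i> * (2 * \<i> * complex_of_real x) * (of_int n + 1/2)^2 = complex_of_real (- 2 * pi * x * (real_of_int n + 1/2)^2)"
      unfolding e1 by (rule gen)
    then have "exp (pi * \<i> * (2 * \<i> * complex_of_real x) * (of_int n + 1/2)^2) = complex_of_real (g n)"
      unfolding g_def by (simp only: exp_of_real)
    moreover have "exp (2 * \<i> * 0 * (of_int n + 1/2)) = 1" by simp
    ultimately show ?thesis by simp
  qed
  have gk: "g (int k) = q^((2*k+1)^2)" for k
  proof -
    have e: "- 2 * pi * x * (real k + 1/2)^2 = - pi * x / 2 * real ((2*k+1)^2)"
      by (simp add: power2_eq_square algebra_simps)
    have "g (int k) = exp (- pi * x / 2 * real ((2*k+1)^2))"
      unfolding g_def of_int_of_nat_eq e ..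
    also have "\<dots> = q^((2*k+1)^2)" unfolding q_def by (rule exp_pow_q[symmetric])
    finally show ?thesis .
  qed
  have gk2: "g (- int k - 1) = q^((2*k+1)^2)" for k
  proof -
    have e: "- 2 * pi * x * (real_of_int (- int k - 1) + 1/2)^2 = - pi * x / 2 * real ((2*k+1)^2)"
      by (simp add: power2_eq_square algebra_simps)
    have "g (- int k - 1) = exp (- pi * x / 2 * real ((2*k+1)^2))"
      unfolding g_def e ..
    also have "\<dots> = q^((2*k+1)^2)" unfolding q_def by (rule exp_pow_q[symmetric])
    finally show ?thesis .
  qed
  have q0: "0 \<le> q" "q \<le> 1/2" using q by (auto simp: q_def)
  have s: "summable (\<lambda>k. q^((2*k+1)^2))" by (rule Tq_summable[OF q0])
  have hs: "(g has_sum (Tq q + Tq q)) UNIV"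
    using has_sum_int_split[of g] s q0 by (simp add: gk gk2 Tq_def)
  have "((\<lambda>n. complex_of_real (g n)) has_sum complex_of_real (2 * Tq q)) UNIV"
    using has_sum_of_real[OF hs] by simp
  then have "theta2 0 (2 * \<i> * complex_of_real x) = complex_of_real (2 * Tq q)"
    unfolding theta2_def tm by (rule infsumI)
  then show ?thesis by (simp add: q_def)
qed


lemma sq_summable: assumes "0 \<le> (q::real)" "q \<le> 1/2" shows "summable (\<lambda>k. q^(k^2))"
proof (rule summable_comparison_test[OF _ summable_geom_c[of q 1]])
  show "\<exists>N. \<forall>n\<ge>N. norm (q^(n^2)) \<le> 1 * q^n"
    using assms by (auto intro!: pow_le_geom k_le_sq)
qed (use assms in auto)

lemma theta3_val:
  fixes x :: real
  assumes x: "x > 0" and q: "exp (- pi * x / 2) \<le> 1/4"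
  shows "theta3 (complex_of_real (pi/2)) (\<i> / 2 * complex_of_real x) = complex_of_real (th (exp (- pi * x / 2)))"
proof -
  define q where "q = exp (- pi * x / 2)"
  define g where "g n = exp (- pi * x / 2 * (real_of_int n)^2) * cos (pi * real_of_int n)" for n :: int
  have tm: "exp (pi * \<i> * (\<i> / 2 * complex_of_real x) * (of_int n)^2) * exp (2 * \<i> * complex_of_real (pi/2) * of_int n)
      = complex_of_real (g n)" for n :: int
  proof -
    have gen: "a * \<i> * (\<i> / 2 * b) * w = - (a * b * w) / 2" for a b w :: complex
    proof -
      have "a * \<i> * (\<i> / 2 * b) * w = (\<i> * \<i>) * (a * b * w) / 2" by (simp only: mult_ac times_divide_eq_right times_divide_eq_left)
      then show ?thesis by simp
    qed
    have e1: "complex_of_real (- pi * x / 2 * (real_of_int n)^2) = - (complex_of_real pi * complex_of_real x * (of_int n)^2) / 2"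
      by simp
    have "pi * \<i> * (\<i> / 2 * complex_of_real x) * (of_int n)^2 = complex_of_real (- pi * x / 2 * (real_of_int n)^2)"
      unfolding e1 by (rule gen)
    then have A: "exp (pi * \<i> * (\<i> / 2 * complex_of_real x) * (of_int n)^2) = complex_of_real (exp (- pi * x / 2 * (real_of_int n)^2))"
      by (simp only: exp_of_real)
    have "2 * \<i> * complex_of_real (pi/2) * of_int n = \<i> * complex_of_real (pi * real_of_int n)" by simp
    then have "exp (2 * \<i> * complex_of_real (pi/2) * of_int n) = cis (pi * real_of_int n)"
      by (simp only: cis_conv_exp)
    also have "\<dots> = complex_of_real (cos (pi * real_of_int n))"
    proof -
      have "sin (pi * real_of_int n) = 0" by (subst sin_zero_iff_int2) (auto simp: mult.commute)
      then show ?thesis by (simp add: complex_eq_iff)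
    qed
    finally show ?thesis using A by (simp add: g_def)
  qed
  have q0: "0 \<le> q" "q \<le> 1/2" using q by (auto simp: q_def)
  have qk: "exp (- pi * x / 2 * (real k)^2) = q^(k^2)" for k
    unfolding q_def exp_pow_q by simp
  have gk: "g (int k) = q^(k^2) * (-1)^k" for k
    unfolding g_def using qk[of k] by (simp add: cos_npi2)
  have gk2: "g (- int k - 1) = q^((Suc k)^2) * (-1)^(Suc k)" for k
  proof -
    have e: "real_of_int (- int k - 1) = - real (Suc k)" by simp
    have "g (- int k - 1) = exp (- pi * x / 2 * (real (Suc k))^2) * cos (pi * real (Suc k))"
      unfolding g_def e power2_minus mult_minus_right cos_minus ..
    then show ?thesis using qk[of "Suc k"] by (simp only: cos_npi2)
  qed
  have s1: "summable (\<lambda>k. q^(k^2) * (-1)^k)"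
    by (rule summable_comparison_test[OF _ sq_summable[OF q0]]) (use q0 in \<open>auto simp: abs_mult power_abs\<close>)
  have s2: "summable (\<lambda>k. q^((Suc k)^2) * (-1)^(Suc k))"
    using s1 by (subst summable_Suc_iff)
  have S1: "(\<Sum>k. q^(k^2) * (-1)^k) = 1 + (\<Sum>k. q^((Suc k)^2) * (-1)^(Suc k))"
    using suminf_split_head[OF s1] by simp
  have sth: "summable (\<lambda>k. cth k * q^(k^2))" by (rule th_summable[OF q0])
  have "th q = 1 + (\<Sum>k. cth (Suc k) * q^((Suc k)^2))"
    using suminf_split_head[OF sth] by (simp add: th_def cth_def)
  also have "(\<Sum>k. cth (Suc k) * q^((Suc k)^2)) = (\<Sum>k. 2 * (q^((Suc k)^2) * (-1)^(Suc k)))"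
    by (simp add: cth_def mult_ac)
  also have "\<dots> = 2 * (\<Sum>k. q^((Suc k)^2) * (-1)^(Suc k))"
    by (rule suminf_mult[OF s2])
  finally have TH: "th q = (\<Sum>k. q^(k^2) * (-1)^k) + (\<Sum>k. q^((Suc k)^2) * (-1)^(Suc k))"
    using S1 by simp
  have a1: "summable (\<lambda>k. \<bar>g (int k)\<bar>)"
    unfolding gk by (rule summable_comparison_test[OF _ sq_summable[OF q0]]) (use q0 in \<open>auto simp: abs_mult power_abs\<close>)
  have a2: "summable (\<lambda>k. \<bar>g (- int k - 1)\<bar>)"
  proof -
    have "summable (\<lambda>k. q^((Suc k)^2))" using sq_summable[OF q0] by (subst summable_Suc_iff)
    then show ?thesis unfolding gk2
      by (rule summable_comparison_test[rotated]) (use q0 in \<open>auto simp: abs_mult power_abs\<close>)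
  qed
  have hs: "(g has_sum th q) UNIV"
    using has_sum_int_split[OF a1 a2] unfolding gk gk2 TH .
  have "((\<lambda>n. complex_of_real (g n)) has_sum complex_of_real (th q)) UNIV"
    using has_sum_of_real[OF hs] by simp
  then have "theta3 (complex_of_real (pi/2)) (\<i> / 2 * complex_of_real x) = complex_of_real (th q)"
    unfolding theta3_def tm by (rule infsumI)
  then show ?thesis by (simp add: q_def)
qed


lemma th_lb: assumes "0 \<le> q" "q \<le> 1/4" shows "th q \<ge> 7/15"
proof -
  have "\<bar>th 0 - th q - 2 * (q - 0)\<bar> \<le> 2/15 * (q - 0)"
    using th_diff[of 0 q] assms by auto
  then have "\<bar>1 - th q - 2 * q\<bar> \<le> 2/15 * q" by (simp add: th_0)
  then show ?thesis using assms by (simp only: abs_le_iff) linarith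
qed

lemma q0_le: "exp (- pi / 2) \<le> 1/4"
proof -
  have "1 + 3/4 + (3/4)^2/2 \<le> exp (3/4::real)" by (rule exp_lower_Taylor_quadratic) simp
  then have a: "65/32 \<le> exp (3/4::real)" by (simp add: power2_eq_square)
  have "(65/32)^2 \<le> (exp (3/4::real))^2" using a by (intro power_mono) auto
  also have "(exp (3/4::real))^2 = exp (3/2)" by (simp add: power2_eq_square exp_add[symmetric])
  finally have b: "4 \<le> exp (3/2::real)" by (simp add: power2_eq_square)
  have "exp (3/2::real) \<le> exp (pi/2)" using pi_gt3 by simp
  then have "4 \<le> exp (pi/2)" using b by linarith
  then have "1 / exp (pi/2) \<le> 1/4" by (simp add: field_simps)
  then show ?thesis by (simp add: exp_minus field_simps)
qed

lemma Psi_half: assumes "x > 0" shows "Psi (x/2) = Aq (exp (- pi * x / 2))"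
proof -
  have "real (Suc k) * exp (- pi * (x/2) * (real (Suc k))^2) = real (Suc k) * exp (- pi * x / 2) ^ ((Suc k)^2)" for k
    unfolding exp_pow_q by (simp add: algebra_simps)
  then show ?thesis unfolding Psi_def Aq_def by presburger
qed

lemma Psi_double: assumes "x > 0" shows "Psi (2*x) = Bq (exp (- pi * x / 2))"
proof -
  have "real (Suc k) * exp (- pi * (2*x) * (real (Suc k))^2) = real (Suc k) * exp (- pi * x / 2) ^ (4*(Suc k)^2)" for k
    unfolding exp_pow_q by (simp add: algebra_simps)
  then show ?thesis unfolding Psi_def Bq_def by presburger
qed

lemma poisson_q0: "(th (exp (- pi / 2)))^2 = 8 * (Tq (exp (- pi / 2)))^2"
proof -
  define q0 where "q0 = exp (- pi / 2)"
  have P: "(\<Sum>k. pe 2 k (1/2)) = (\<Sum>k. ph 2 k (1/2)) / sqrt 2"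
    by (rule poisson_half) auto
  have pe2: "pe 2 k (1/2) = 2 * q0^((2*k+1)^2)" for k
  proof -
    have e: "- pi * 2 * (real k + 1/2)^2 = - pi / 2 * real ((2*k+1)^2)" "- pi * 2 * (real k + 1 - 1/2)^2 = - pi / 2 * real ((2*k+1)^2)"
      by (simp_all add: power2_eq_square algebra_simps)
    have "q0^((2*k+1)^2) = exp (- pi / 2 * real ((2*k+1)^2))"
      unfolding q0_def exp_of_nat_mult[symmetric] by (simp add: mult.commute)
    then show ?thesis unfolding pe_def e by simp
  qed
  have ph2: "ph 2 k (1/2) = cth k * q0^(k^2)" for k
  proof -
    have "q0^(k^2) = exp (- pi * (real k)^2 / 2)"
      unfolding q0_def exp_of_nat_mult[symmetric] by (simp add: mult.commute)
    moreover have "cos (2 * pi * real k * (1/2)) = (-1)^k"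
      using cos_npi2[of k] by (simp add: mult.commute)
    ultimately show ?thesis by (simp add: ph_def cth_def)
  qed
  have "2 * Tq q0 = th q0 / sqrt 2"
  proof -
    have s: "summable (\<lambda>k. q0^((2*k+1)^2))" using q0_le by (intro Tq_summable) (auto simp: q0_def)
    have "(\<Sum>k. pe 2 k (1/2)) = 2 * Tq q0" unfolding pe2 Tq_def by (rule suminf_mult[OF s])
    moreover have "(\<Sum>k. ph 2 k (1/2)) = th q0" unfolding ph2 th_def ..
    ultimately show ?thesis using P by simp
  qed
  then have "th q0 = 2 * sqrt 2 * Tq q0" by (simp add: field_simps)
  then have "(th q0)^2 = 8 * (Tq q0)^2" by (simp add: power_mult_distrib)
  then show ?thesis by (simp add: q0_def)
qed

theorem lemma6p2:
  fixes x :: real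
  assumes "x > 1"
  shows "(8 * complex_of_real pi * complex_of_real (x - 1) * complex_of_real (Psi (x/2)) * complex_of_real (Psi (2*x))
            + 2 * (theta2 0 (2 * \<i> * complex_of_real x))^2)
          / (theta3 (complex_of_real (pi/2)) (\<i> / 2 * complex_of_real x))^2
        < 2 * (theta2 0 (2 * \<i>))^2 / (theta3 (complex_of_real (pi/2)) (\<i> / 2))^2
     \<and> 2 * (theta2 0 (2 * \<i>))^2 / (theta3 (complex_of_real (pi/2)) (\<i> / 2))^2 = 1"
proof -
  define q where "q = exp (- pi * x / 2)"
  define q0 where "q0 = exp (- pi / 2)"
  have x0: "x > 0" using assms by simp
  have qq0: "q < q0" using assms unfolding q_def q0_def by simp
  have qpos: "0 < q" by (simp add: q_def)
  have q0le: "q0 \<le> 1/4" unfolding q0_def by (rule q0_le)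
  have qle: "exp (- pi * x / 2) \<le> 1/4" using qq0 q0le by (simp add: q_def)
  have q0le': "exp (- pi * 1 / 2) \<le> 1/4" using q0le by (simp add: q0_def)
  have t2x: "theta2 0 (2 * \<i> * complex_of_real x) = complex_of_real (2 * Tq q)"
    using theta2_val[OF x0 qle] by (simp add: q_def)
  have t3x: "theta3 (complex_of_real (pi/2)) (\<i> / 2 * complex_of_real x) = complex_of_real (th q)"
    using theta3_val[OF x0 qle] by (simp add: q_def)
  have t21: "theta2 0 (2 * \<i>) = complex_of_real (2 * Tq q0)"
    using theta2_val[of 1] q0le' by (simp add: q0_def)
  have t31: "theta3 (complex_of_real (pi/2)) (\<i> / 2) = complex_of_real (th q0)"
    using theta3_val[of 1] q0le' by (simp add: q0_def)
  have ps1: "Psi (x/2) = Aq q" using Psi_half[OF x0] by (simp add: q_def)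
  have ps2: "Psi (2*x) = Bq q" using Psi_double[OF x0] by (simp add: q_def)
  have eq0: "(th q0)^2 = 8 * (Tq q0)^2" using poisson_q0 by (simp add: q0_def)
  have th0pos: "th q0 > 0" using th_lb[of q0] q0le by (simp add: q0_def)
  have thpos: "th q > 0" using th_lb[of q] qle qpos by (simp add: q_def)
  have lnq: "ln (q0 / q) = pi * (x - 1) / 2"
    unfolding q_def q0_def by (simp add: exp_diff[symmetric] algebra_simps)
  have K: "16 * ln (q0 / q) * Aq q * Bq q + 8 * (Tq q)^2 < (th q)^2"
    by (rule key_ineq[OF qpos qq0 q0le eq0])
  define L where "L = (8 * pi * (x - 1) * Aq q * Bq q + 2 * (2 * Tq q)^2) / (th q)^2"
  have Lval: "(8 * complex_of_real pi * complex_of_real (x - 1) * complex_of_real (Psi (x/2)) * complex_of_real (Psi (2*x))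
            + 2 * (theta2 0 (2 * \<i> * complex_of_real x))^2)
          / (theta3 (complex_of_real (pi/2)) (\<i> / 2 * complex_of_real x))^2 = complex_of_real L"
    unfolding t2x t3x ps1 ps2 L_def by simp
  have Rval: "2 * (theta2 0 (2 * \<i>))^2 / (theta3 (complex_of_real (pi/2)) (\<i> / 2))^2 = 1"
  proof -
    have h: "2 * (2 * Tq q0)^2 = (th q0)^2" using eq0 by (simp add: power_mult_distrib)
    have nz: "(th q0)^2 \<noteq> 0" using th0pos by simp
    have "2 * (2 * Tq q0)^2 / (th q0)^2 = (th q0)^2 / (th q0)^2" by (simp only: h)
    also have "\<dots> = 1" by (rule divide_self[OF nz])
    finally have e1: "2 * (2 * Tq q0)^2 / (th q0)^2 = 1" .
    have "2 * (complex_of_real (2 * Tq q0))^2 / (complex_of_real (th q0))^2 = complex_of_real (2 * (2 * Tq q0)^2 / (th q0)^2)"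
      by simp
    also have "\<dots> = 1" by (simp only: e1 of_real_1)
    finally show ?thesis unfolding t21 t31 .
  qed
  have "L < 1"
  proof -
    have E: "8 * pi * (x - 1) * Aq q * Bq q + 2 * (2 * Tq q)^2 = 16 * ln (q0 / q) * Aq q * Bq q + 8 * (Tq q)^2"
      unfolding lnq by (simp add: power_mult_distrib)
    then have N: "8 * pi * (x - 1) * Aq q * Bq q + 2 * (2 * Tq q)^2 < (th q)^2"
      using K by (simp only:)
    have tp: "0 < (th q)^2" using thpos by simp
    show ?thesis unfolding L_def divide_less_eq_1_pos[OF tp] by (rule N)
  qed
  then have "complex_of_real L < 1" by (simp add: less_complex_def)
  then show ?thesis unfolding Lval Rval by simp
qed

end
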